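(* Let $(E,\mathscr{T},\le)$ be a locally compact $T_2$-preordered Tychonoff space with $G(\le)=\bigcap_{f\in\mathcal{F}}G_f$, and let $\mathcal{H}\subseteq\mathcal{F}$ with $G(\le)=\bigcap_{h\in\mathcal{H}}G_h$. Then the $\mathcal{H}$-compactification and the $i(\mathcal{H})$-compactification are equivalent.
   Context: $T_2$-preordered: the graph $G(\le)=\{(x,y):x\le y\}$ is closed in $E\times E$. $\mathcal{F}$ is the family of continuous isotone functions $f:E\to[0,1]$; $G_f=\{(x,y):f(x)\le f(y)\}$. $\mathcal{C}$ is the family of continuous functions $E\to[0,1]$ constant outside a compact set. For $\mathcal{H}\subseteq\mathcal{F}$ with $G(\le)=\bigcap_{h\in\mathcal{H}}G_h$, the $\mathcal{H}$-compactification is $c:E\to[0,1]^{\mathcal{H}\cup\mathcal{C}}$, $c(x)=(g(x))_{g\in\mathcal{H}\cup\mathcal{C}}$, with $cE$ the closure of $c(E)$, induced product topology, and preorder $x\le_c y$ iff $x_h\le y_h$ for all $h\in\mathcal{H}$. $i(\mathcal{H})$ denotes the set of $f\in\mathcal{F}$ such that $f\circ c^{-1}:c(E)\to[0,1]$ extends to a continuous isotone function on $(cE,\le_c)$, where $c$ is the $\mathcal{H}$-compactification (so $\mathcal{H}\subseteq i(\mathcal{H})$ and $i(\mathcal{H})$ also represents $\le$). For preorder compactifications, $c_1\le c_2$ means there is a continuous isotone $C:c_2E\to c_1E$ with $C\circ c_2=c_1$; equivalent means $c_1\le c_2$ and $c_2\le c_1$. *)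

theory Defs
  imports "HOL-Analysis.Analysis"
begin

text \<open>Real-valued functions on E are represented as functions that are extensional on
the carrier (value undefined outside), so that each function on E has a unique
representative.\<close>

definition unit_itv :: "real topology" where
  "unit_itv = top_of_set {0..1}"

definition T2_preordered :: "'a topology \<Rightarrow> ('a \<Rightarrow> 'a \<Rightarrow> bool) \<Rightarrow> bool" where
  "T2_preordered X le \<longleftrightarrow>
     (\<forall>x\<in>topspace X. le x x) \<and>
     (\<forall>x\<in>topspace X. \<forall>y\<in>topspace X. \<forall>z\<in>topspace X. le x y \<longrightarrow> le y z \<longrightarrow> le x z) \<and>
     closedin (prod_topology X X) {(x, y). x \<in> topspace X \<and> y \<in> topspace X \<and> le x y}"

definition isoF :: "'a topology \<Rightarrow> ('a \<Rightarrow> 'a \<Rightarrow> bool) \<Rightarrow> ('a \<Rightarrow> real) set" where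
  "isoF X le = {f. f \<in> extensional (topspace X) \<and> continuous_map X unit_itv f \<and>
      (\<forall>x\<in>topspace X. \<forall>y\<in>topspace X. le x y \<longrightarrow> f x \<le> f y)}"

definition cptC :: "'a topology \<Rightarrow> ('a \<Rightarrow> real) set" where
  "cptC X = {g. g \<in> extensional (topspace X) \<and> continuous_map X unit_itv g \<and>
      (\<exists>K a. compactin X K \<and> (\<forall>x\<in>topspace X - K. g x = a))}"

text \<open>G(le) = intersection of the G_h, h in H.\<close>
definition represents :: "'a topology \<Rightarrow> ('a \<Rightarrow> 'a \<Rightarrow> bool) \<Rightarrow> ('a \<Rightarrow> real) set \<Rightarrow> bool" where
  "represents X le H \<longleftrightarrow>
     (\<forall>x\<in>topspace X. \<forall>y\<in>topspace X. le x y \<longleftrightarrow> (\<forall>h\<in>H. h x \<le> h y))"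

text \<open>The H-compactification: the map c, the cube [0,1]^(H u C), the space cE and its preorder.\<close>
definition cmap :: "'a topology \<Rightarrow> ('a \<Rightarrow> real) set \<Rightarrow> 'a \<Rightarrow> (('a \<Rightarrow> real) \<Rightarrow> real)" where
  "cmap X H x = (\<lambda>g\<in>H \<union> cptC X. g x)"

definition cube :: "'a topology \<Rightarrow> ('a \<Rightarrow> real) set \<Rightarrow> (('a \<Rightarrow> real) \<Rightarrow> real) topology" where
  "cube X H = product_topology (\<lambda>_. unit_itv) (H \<union> cptC X)"

definition cE :: "'a topology \<Rightarrow> ('a \<Rightarrow> real) set \<Rightarrow> (('a \<Rightarrow> real) \<Rightarrow> real) set" where
  "cE X H = cube X H closure_of (cmap X H ` topspace X)"

definition cspace :: "'a topology \<Rightarrow> ('a \<Rightarrow> real) set \<Rightarrow> (('a \<Rightarrow> real) \<Rightarrow> real) topology" where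
  "cspace X H = subtopology (cube X H) (cE X H)"

definition cle :: "('a \<Rightarrow> real) set \<Rightarrow> (('a \<Rightarrow> real) \<Rightarrow> real) \<Rightarrow> (('a \<Rightarrow> real) \<Rightarrow> real) \<Rightarrow> bool" where
  "cle H p q \<longleftrightarrow> (\<forall>h\<in>H. p h \<le> q h)"

definition iH :: "'a topology \<Rightarrow> ('a \<Rightarrow> 'a \<Rightarrow> bool) \<Rightarrow> ('a \<Rightarrow> real) set \<Rightarrow> ('a \<Rightarrow> real) set" where
  "iH X le H = {f \<in> isoF X le. \<exists>F'. continuous_map (cspace X H) unit_itv F' \<and>
      (\<forall>p\<in>cE X H. \<forall>q\<in>cE X H. cle H p q \<longrightarrow> F' p \<le> F' q) \<and>
      (\<forall>x\<in>topspace X. F' (cmap X H x) = f x)}"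

text \<open>c1 <= c2 (c1 the H1-compactification, c2 the H2-compactification).\<close>
definition comp_le :: "'a topology \<Rightarrow> ('a \<Rightarrow> real) set \<Rightarrow> ('a \<Rightarrow> real) set \<Rightarrow> bool" where
  "comp_le X H1 H2 \<longleftrightarrow> (\<exists>Cm. continuous_map (cspace X H2) (cspace X H1) Cm \<and>
      (\<forall>p\<in>cE X H2. \<forall>q\<in>cE X H2. cle H2 p q \<longrightarrow> cle H1 (Cm p) (Cm q)) \<and>
      (\<forall>x\<in>topspace X. Cm (cmap X H2 x) = cmap X H1 x))"

definition comp_equiv :: "'a topology \<Rightarrow> ('a \<Rightarrow> real) set \<Rightarrow> ('a \<Rightarrow> real) set \<Rightarrow> bool" where
  "comp_equiv X H1 H2 \<longleftrightarrow> comp_le X H1 H2 \<and> comp_le X H2 H1"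

end

theory Submission
  imports Defs
begin

lemma cmap_in_cube:
  assumes "H \<subseteq> isoF X le" "x \<in> topspace X"
  shows "cmap X H x \<in> topspace (cube X H)"
proof -
  have "\<And>g. g \<in> H \<union> cptC X \<Longrightarrow> g x \<in> {0..1}"
  proof -
    fix g assume "g \<in> H \<union> cptC X"
    then have "continuous_map X unit_itv g" using assms(1) by (auto simp: isoF_def cptC_def)
    then show "g x \<in> {0..1}" using assms(2) by (auto simp: continuous_map_def unit_itv_def)
  qed
  then show ?thesis by (auto simp: cube_def cmap_def topspace_product_topology unit_itv_def)
qed

lemma cE_sub: "cE X H \<subseteq> topspace (cube X H)"
  by (simp add: cE_def closure_of_subset_topspace)

lemma topspace_cspace: "topspace (cspace X H) = cE X H"
  using cE_sub by (auto simp: cspace_def)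

lemma cmap_in_cE:
  assumes "H \<subseteq> isoF X le" "x \<in> topspace X"
  shows "cmap X H x \<in> cE X H"
proof -
  have "cmap X H ` topspace X \<subseteq> topspace (cube X H)" using cmap_in_cube[OF assms(1)] by auto
  then show ?thesis unfolding cE_def using closure_of_subset assms(2) by blast
qed

lemma lift_cont:
  assumes H1: "H1 \<subseteq> isoF X le"
    and c: "continuous_map (cspace X H1) (cube X H2) Cm"
    and e: "\<forall>x\<in>topspace X. Cm (cmap X H1 x) = cmap X H2 x"
  shows "continuous_map (cspace X H1) (cspace X H2) Cm"
proof -
  let ?S = "cmap X H1 ` topspace X"
  have S: "?S \<subseteq> cE X H1" using cmap_in_cE[OF H1] by auto
  have cl: "cspace X H1 closure_of ?S = cE X H1"
  proof -
    have "cE X H1 \<inter> ?S = ?S" using S by blast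
    then show ?thesis unfolding cspace_def closure_of_subtopology by (simp add: cE_def)
  qed
  have "Cm ` (cspace X H1 closure_of ?S) \<subseteq> cube X H2 closure_of (Cm ` ?S)"
    by (rule continuous_map_image_closure_subset[OF c])
  moreover have "Cm ` ?S = cmap X H2 ` topspace X" using e by force
  ultimately have "Cm ` cE X H1 \<subseteq> cE X H2" using cl by (simp add: cE_def)
  then have a: "Cm ` cE X H1 \<subseteq> cE X H2" .
  have "Cm \<in> topspace (cspace X H1) \<rightarrow> cE X H2" using a topspace_cspace[of X H1] by auto
  then have "continuous_map (cspace X H1) (subtopology (cube X H2) (cE X H2)) Cm"
    by (rule continuous_map_into_subtopology[OF c])
  then show ?thesis by (simp only: cspace_def)
qed

lemma proj_cont:
  assumes "g \<in> H \<union> cptC X"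
  shows "continuous_map (cspace X H) unit_itv (\<lambda>p. p g)"
proof -
  have "continuous_map (cube X H) unit_itv (\<lambda>p. p g)"
    unfolding cube_def by (rule continuous_map_product_projection[OF assms])
  then show ?thesis unfolding cspace_def by (rule continuous_map_from_subtopology)
qed

theorem mainTheorem14:
  fixes X :: "'a topology" and le :: "'a \<Rightarrow> 'a \<Rightarrow> bool" and H :: "('a \<Rightarrow> real) set"
  assumes "locally_compact_space X"
    and "completely_regular_space X" and "Hausdorff_space X"
    and "T2_preordered X le"
    and "represents X le (isoF X le)"
    and "H \<subseteq> isoF X le"
    and "represents X le H"
  shows "comp_equiv X H (iH X le H)"
proof -
  let ?H' = "iH X le H"
  have HF: "H \<subseteq> isoF X le" by fact
  have H'F: "?H' \<subseteq> isoF X le" by (auto simp: iH_def)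
  have HH': "H \<subseteq> ?H'"
  proof
    fix h assume h: "h \<in> H"
    have "continuous_map (cspace X H) unit_itv (\<lambda>p. p h)" using h proj_cont by blast
    moreover have "\<forall>p\<in>cE X H. \<forall>q\<in>cE X H. cle H p q \<longrightarrow> p h \<le> q h" using h by (auto simp: cle_def)
    moreover have "\<forall>x\<in>topspace X. cmap X H x h = h x" using h by (auto simp: cmap_def)
    ultimately have "\<exists>F'. continuous_map (cspace X H) unit_itv F' \<and>
      (\<forall>p\<in>cE X H. \<forall>q\<in>cE X H. cle H p q \<longrightarrow> F' p \<le> F' q) \<and>
      (\<forall>x\<in>topspace X. F' (cmap X H x) = h x)" by (intro exI[of _ "\<lambda>p. p h"] conjI)
    moreover have "h \<in> isoF X le" using h HF by blast
    ultimately show "h \<in> ?H'" unfolding iH_def by simp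
  qed
  have le1: "comp_le X H ?H'"
  proof -
    define Cm :: "(('a \<Rightarrow> real) \<Rightarrow> real) \<Rightarrow> (('a \<Rightarrow> real) \<Rightarrow> real)" where "Cm = (\<lambda>p. restrict p (H \<union> cptC X))"
    have c: "continuous_map (cspace X ?H') (cube X H) Cm"
      unfolding Cm_def cube_def
    proof (subst continuous_map_componentwise, intro conjI ballI)
      show "(\<lambda>p. restrict p (H \<union> cptC X)) ` topspace (cspace X ?H') \<subseteq> extensional (H \<union> cptC X)"
        by auto
      fix k assume "k \<in> H \<union> cptC X"
      then have "k \<in> ?H' \<union> cptC X" using HH' by auto
      then show "continuous_map (cspace X ?H') unit_itv (\<lambda>x. restrict x (H \<union> cptC X) k)"
        using proj_cont[of k ?H' X] \<open>k \<in> H \<union> cptC X\<close> by simp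
    qed
    have e: "\<forall>x\<in>topspace X. Cm (cmap X ?H' x) = cmap X H x"
    proof
      fix x assume "x \<in> topspace X"
      show "Cm (cmap X ?H' x) = cmap X H x"
      proof (rule ext)
        fix g
        show "Cm (cmap X ?H' x) g = cmap X H x g"
          using HH' unfolding Cm_def cmap_def by (cases "g \<in> H \<union> cptC X") auto
      qed
    qed
    have "continuous_map (cspace X ?H') (cspace X H) Cm" by (rule lift_cont[OF H'F c e])
    moreover have "\<forall>p\<in>cE X ?H'. \<forall>q\<in>cE X ?H'. cle ?H' p q \<longrightarrow> cle H (Cm p) (Cm q)"
    proof (intro ballI impI)
      fix p q assume "cle ?H' p q"
      then show "cle H (Cm p) (Cm q)" using HH' unfolding cle_def Cm_def by auto
    qed
    ultimately show ?thesis using e unfolding comp_le_def by (intro exI[of _ Cm] conjI)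
  qed
  have le2: "comp_le X ?H' H"
  proof -
    define P where "P = (\<lambda>f F'. continuous_map (cspace X H) unit_itv F' \<and>
      (\<forall>p\<in>cE X H. \<forall>q\<in>cE X H. cle H p q \<longrightarrow> F' p \<le> F' q) \<and>
      (\<forall>x\<in>topspace X. F' (cmap X H x) = f x))"
    define Fe where "Fe = (\<lambda>f. SOME F'. P f F')"
    have Fe: "P f (Fe f)" if "f \<in> ?H'" for f
    proof -
      have "\<exists>F'. P f F'" using that unfolding iH_def P_def by simp
      then show ?thesis unfolding Fe_def by (rule someI_ex)
    qed
    define Cm :: "(('a \<Rightarrow> real) \<Rightarrow> real) \<Rightarrow> (('a \<Rightarrow> real) \<Rightarrow> real)" where "Cm = (\<lambda>p. \<lambda>g\<in>?H' \<union> cptC X. if g \<in> ?H' then Fe g p else p g)"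
    have c: "continuous_map (cspace X H) (cube X ?H') Cm"
      unfolding Cm_def cube_def
    proof (subst continuous_map_componentwise, intro conjI ballI)
      show "(\<lambda>p. \<lambda>g\<in>?H' \<union> cptC X. if g \<in> ?H' then Fe g p else p g) ` topspace (cspace X H) \<subseteq> extensional (?H' \<union> cptC X)"
        by auto
      fix k assume k: "k \<in> ?H' \<union> cptC X"
      show "continuous_map (cspace X H) unit_itv
              (\<lambda>x. (\<lambda>g\<in>?H' \<union> cptC X. if g \<in> ?H' then Fe g x else x g) k)"
      proof (cases "k \<in> ?H'")
        case True
        then show ?thesis using Fe[OF True] k by (simp add: P_def)
      next
        case False
        then have "k \<in> H \<union> cptC X" using k by auto
        then show ?thesis using proj_cont[of k H X] False k by simp
      qed
    qed
    have e: "\<forall>x\<in>topspace X. Cm (cmap X H x) = cmap X ?H' x"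
    proof
      fix x assume x: "x \<in> topspace X"
      show "Cm (cmap X H x) = cmap X ?H' x"
        unfolding Cm_def cmap_def
      proof (rule ext)
        fix g
        show "(\<lambda>g\<in>?H' \<union> cptC X. if g \<in> ?H' then Fe g (\<lambda>g\<in>H \<union> cptC X. g x) else (\<lambda>g\<in>H \<union> cptC X. g x) g) g
              = (\<lambda>g\<in>?H' \<union> cptC X. g x) g"
        proof (cases "g \<in> ?H'")
          case True
          then have "Fe g (cmap X H x) = g x" using Fe[OF True] x by (simp add: P_def)
          then show ?thesis using True by (simp add: cmap_def)
        next
          case False
          then show ?thesis by (simp add: cmap_def)
        qed
      qed
    qed
    have "continuous_map (cspace X H) (cspace X ?H') Cm" by (rule lift_cont[OF HF c e])
    moreover have "\<forall>p\<in>cE X H. \<forall>q\<in>cE X H. cle H p q \<longrightarrow> cle ?H' (Cm p) (Cm q)"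
    proof (intro ballI impI)
      fix p q assume pq: "p \<in> cE X H" "q \<in> cE X H" "cle H p q"
      show "cle ?H' (Cm p) (Cm q)" unfolding cle_def
      proof
        fix h assume h: "h \<in> ?H'"
        have "Fe h p \<le> Fe h q" using Fe[OF h] pq unfolding P_def by blast
        then show "Cm p h \<le> Cm q h" using h by (simp add: Cm_def)
      qed
    qed
    ultimately show ?thesis using e unfolding comp_le_def by (intro exI[of _ Cm] conjI)
  qed
  show ?thesis using le1 le2 by (simp add: comp_equiv_def)
qed

end
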